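(* Let $G_1$ and $G_2$ be graphs with transition matrices $H_{G_1}(t)$ and $H_{G_2}(t)$. Suppose that $G_1$ is periodic at a vertex $u$ at time $\tau\neq 0$, i.e. $H_{G_1}(\tau)e_u=\gamma e_u$ for some $|\gamma|=1$, and that $G_2$ exhibits perfect state transfer from a vertex $v$ to a vertex $w$ at time $\eta\neq 0$, i.e. $H_{G_2}(\eta)e_w=\gamma' e_v$ for some $|\gamma'|=1$. If $\tau$ and $\eta$ are linearly independent over $\mathbb Q$, then the Cartesian product $G_1\square G_2$ has pretty good state transfer between the vertices $(u,v)$ and $(u,w)$.
   Context: The transition matrix of a graph with adjacency matrix $A$ is $H(t)=\exp(-itA)$, $t\in\mathbb R$; $e_u$ is the standard basis vector of vertex $u$. The Cartesian product $G_1\square G_2$ has vertex set $V(G_1)\times V(G_2)$, with $(u_1,u_2)\sim(v_1,v_2)$ iff either $u_1\sim v_1$ in $G_1$ and $u_2=v_2$, or $u_1=v_1$ and $u_2\sim v_2$ in $G_2$. A graph has pretty good state transfer between vertices $x$ and $y$ if for every $\epsilon>0$ there is $t\in\mathbb R$ with $\big||e_x^TH(t)e_y|-1\big|<\epsilon$. *)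

theory Defs
  imports "HOL-Analysis.Analysis"
begin

definition simple_graph :: "('v \<Rightarrow> 'v \<Rightarrow> bool) \<Rightarrow> bool" where
  "simple_graph E \<longleftrightarrow> (\<forall>x y. E x y \<longrightarrow> E y x) \<and> (\<forall>x. \<not> E x x)"

definition adj_matrix :: "('v::finite \<Rightarrow> 'v \<Rightarrow> bool) \<Rightarrow> complex ^'v ^'v" where
  "adj_matrix E = (\<chi> i j. if E i j then 1 else 0)"

definition mat_pow :: "complex ^'n ^'n \<Rightarrow> nat \<Rightarrow> complex ^'n ^'n" where
  "mat_pow M k = ((\<lambda>B. B ** M) ^^ k) (mat 1)"

definition mat_exp :: "complex ^'n ^'n \<Rightarrow> complex ^'n ^'n" where
  "mat_exp M = (\<Sum>k. (1 / fact k) *\<^sub>R mat_pow M k)"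

definition transition :: "('v::finite \<Rightarrow> 'v \<Rightarrow> bool) \<Rightarrow> real \<Rightarrow> complex ^'v ^'v" where
  "transition E t = mat_exp (\<chi> i j. (- \<i> * complex_of_real t) * adj_matrix E $ i $ j)"

definition cart_prod :: "('a \<Rightarrow> 'a \<Rightarrow> bool) \<Rightarrow> ('b \<Rightarrow> 'b \<Rightarrow> bool) \<Rightarrow> ('a \<times> 'b) \<Rightarrow> ('a \<times> 'b) \<Rightarrow> bool" where
  "cart_prod E1 E2 = (\<lambda>(u1, u2) (v1, v2). (E1 u1 v1 \<and> u2 = v2) \<or> (u1 = v1 \<and> E2 u2 v2))"

definition pgst :: "('v::finite \<Rightarrow> 'v \<Rightarrow> bool) \<Rightarrow> 'v \<Rightarrow> 'v \<Rightarrow> bool" where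
  "pgst E x y \<longleftrightarrow> (\<forall>\<epsilon>>0. \<exists>t::real. \<bar>cmod (transition E t $ x $ y) - 1\<bar> < \<epsilon>)"

end

theory Submission imports Defs begin

typedef (overloaded) ('n::finite) cm = "UNIV :: ((complex^'n) \<Rightarrow>\<^sub>L (complex^'n)) set" morphisms rep abs by simp
setup_lifting type_definition_cm

instantiation cm :: (finite) real_normed_vector
begin
lift_definition norm_cm :: "'a cm \<Rightarrow> real" is norm .
lift_definition minus_cm :: "'a cm \<Rightarrow> 'a cm \<Rightarrow> 'a cm" is "(-)" .
lift_definition plus_cm :: "'a cm \<Rightarrow> 'a cm \<Rightarrow> 'a cm" is "(+)" .
lift_definition uminus_cm :: "'a cm \<Rightarrow> 'a cm" is "uminus" .
lift_definition zero_cm :: "'a cm" is "0" .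
lift_definition scaleR_cm :: "real \<Rightarrow> 'a cm \<Rightarrow> 'a cm" is "scaleR" .
definition dist_cm :: "'a cm \<Rightarrow> 'a cm \<Rightarrow> real" where "dist_cm a b = norm (a - b)"
definition uniformity_cm :: "('a cm \<times> 'a cm) filter" where
  "uniformity_cm = (INF e\<in>{0 <..}. principal {(x, y). dist x y < e})"
definition open_cm :: "'a cm set \<Rightarrow> bool" where
  "open_cm S = (\<forall>x\<in>S. \<forall>\<^sub>F (x', y) in uniformity. x' = x \<longrightarrow> y \<in> S)"
definition sgn_cm :: "'a cm \<Rightarrow> 'a cm" where "sgn_cm x = scaleR (inverse (norm x)) x"
instance
  apply standard
  unfolding dist_cm_def open_cm_def sgn_cm_def uniformity_cm_def
  apply (rule refl | (transfer, force simp: norm_triangle_ineq algebra_simps scaleR_add_right scaleR_add_left))+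
  done
end

instantiation cm :: (finite) real_normed_algebra_1
begin
lift_definition times_cm :: "'a cm \<Rightarrow> 'a cm \<Rightarrow> 'a cm" is "(o\<^sub>L)" .
lift_definition one_cm :: "'a cm" is "id_blinfun" .
instance
proof
  fix a b c :: "'a cm" and r :: real
  show "a * b * c = a * (b * c)" by transfer (rule blinfun_eqI, simp add: blinfun.bilinear_simps)
  show "1 * a = a" by transfer (rule blinfun_eqI, simp add: blinfun.bilinear_simps)
  show "a * 1 = a" by transfer (rule blinfun_eqI, simp add: blinfun.bilinear_simps)
  show "(a + b) * c = a * c + b * c" by transfer (rule blinfun_eqI, simp add: blinfun.bilinear_simps)
  show "a * (b + c) = a * b + a * c" by transfer (rule blinfun_eqI, simp add: blinfun.bilinear_simps)
  show "(0::'a cm) \<noteq> 1"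
    apply (rule notI, drule arg_cong[where f="\<lambda>x. blinfun_apply (rep x) (axis undefined 1)"])
    by (simp add: zero_cm.rep_eq one_cm.rep_eq)
  show "r *\<^sub>R a * b = r *\<^sub>R (a * b)" by transfer (rule blinfun_eqI, simp add: blinfun.bilinear_simps)
  show "a * r *\<^sub>R b = r *\<^sub>R (a * b)" by transfer (rule blinfun_eqI, simp add: blinfun.bilinear_simps)
  show "norm (a * b) \<le> norm a * norm b" by transfer (rule norm_blinfun_compose)
  show "norm (1::'a cm) = 1" by transfer simp
qed
end

instance cm :: (finite) banach
proof
  fix X :: "nat \<Rightarrow> 'a cm" assume "Cauchy X"
  then have "Cauchy (\<lambda>n. rep (X n))"
    unfolding Cauchy_def dist_norm by (simp add: norm_cm.rep_eq minus_cm.rep_eq)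
  then obtain L where "(\<lambda>n. rep (X n)) \<longlonglongrightarrow> L" using Cauchy_convergent_iff convergent_def by blast
  then have "X \<longlonglongrightarrow> abs L"
    unfolding LIMSEQ_iff dist_norm  by (simp add: norm_cm.rep_eq minus_cm.rep_eq abs_inverse)
  then show "convergent X" unfolding convergent_def by blast
qed


lemma mv_axis: "((M::complex^'n^'n) *v axis j 1) $ i = M $ i $ j"
  by (simp add: matrix_vector_mult_def axis_def if_distrib cong: if_cong)

lemma linear_mv: "linear (\<lambda>x::complex^'n. (M::complex^'n^'n) *v x)"
  by (rule linearI) (simp_all add: matrix_vector_right_distrib vec_eq_iff matrix_vector_mult_def scaleR_sum_right
      distrib_left sum.distrib)

lemma bl_mv: "bounded_linear (\<lambda>x::complex^'n. (M::complex^'n^'n) *v x)"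
  using linear_mv linear_conv_bounded_linear by blast

definition Lm :: "complex^'n^'n \<Rightarrow> 'n::finite cm" where
  "Lm M = abs (Blinfun (\<lambda>x. M *v x))"

definition Em :: "'n::finite cm \<Rightarrow> complex^'n^'n" where
  "Em f = (\<chi> i j. blinfun_apply (rep f) (axis j 1) $ i)"

lemma rep_Lm: "blinfun_apply (rep (Lm M)) x = M *v x"
  by (simp add: Lm_def abs_inverse bounded_linear_Blinfun_apply[OF bl_mv])

lemma Em_Lm[simp]: "Em (Lm M) = M"
  by (simp add: Em_def rep_Lm mv_axis vec_eq_iff)

lemma Lm_mult: "Lm (M ** N) = Lm M * Lm N"
  by (rule rep_inject[THEN iffD1], rule blinfun_eqI)
     (simp add: times_cm.rep_eq rep_Lm matrix_vector_mul_assoc)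

lemma Lm_one: "Lm (mat 1) = 1"
  by (rule rep_inject[THEN iffD1], rule blinfun_eqI) (simp add: one_cm.rep_eq rep_Lm)

lemma linear_Lm: "linear (Lm :: complex^'n^'n \<Rightarrow> 'n::finite cm)"
  apply (rule linearI)
   apply (rule rep_inject[THEN iffD1], rule blinfun_eqI)
   apply (simp add: plus_cm.rep_eq plus_blinfun.rep_eq rep_Lm matrix_vector_mult_add_rdistrib)
  apply (rule rep_inject[THEN iffD1], rule blinfun_eqI)
  apply (simp add: scaleR_cm.rep_eq scaleR_blinfun.rep_eq rep_Lm vec_eq_iff matrix_vector_mult_def scaleR_sum_right)
  done

lemma bl_Lm: "bounded_linear (Lm :: complex^'n^'n \<Rightarrow> 'n::finite cm)"
  using linear_Lm linear_conv_bounded_linear by blast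

lemma norm_vec_le_sum: "norm (x::'a::real_normed_vector^'n) \<le> (\<Sum>i\<in>UNIV. norm (x$i))"
  by (simp add: norm_vec_def L2_set_le_sum)

lemma norm_axis_c: "norm (axis j (1::complex) :: complex^'n) = 1"
  by (simp add: inner_axis' norm_eq_1)

lemma Em_entry_le: "norm (Em f $ i $ j) \<le> norm (f::'n::finite cm)"
proof -
  have "norm (Em f $ i $ j) = norm (blinfun_apply (rep f) (axis j 1) $ i)"
    by (simp add: Em_def)
  also have "\<dots> \<le> norm (blinfun_apply (rep f) (axis j 1))"
    by (rule Finite_Cartesian_Product.norm_nth_le)
  also have "\<dots> \<le> norm (rep f) * norm (axis j (1::complex) :: complex^'n)" by (rule norm_blinfun)
  finally show ?thesis by (simp add: norm_axis_c norm_cm.rep_eq)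
qed

lemma bl_Em: "bounded_linear (Em :: 'n::finite cm \<Rightarrow> complex^'n^'n)"
proof (rule bounded_linear_intro[where K="real (CARD('n)) * real (CARD('n))"])
  fix f g :: "'n cm" and r :: real
  show "Em (f + g) = Em f + Em g"
    by (simp add: Em_def vec_eq_iff plus_cm.rep_eq blinfun.add_left)
  show "Em (r *\<^sub>R f) = r *\<^sub>R Em f"
    by (simp add: Em_def vec_eq_iff scaleR_cm.rep_eq scaleR_blinfun.rep_eq)
  have "norm (Em f) \<le> (\<Sum>i\<in>UNIV. norm (Em f $ i))" by (rule norm_vec_le_sum)
  also have "\<dots> \<le> (\<Sum>i\<in>(UNIV::'n set). \<Sum>j\<in>(UNIV::'n set). norm (Em f $ i $ j))"
    by (intro sum_mono norm_vec_le_sum)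
  also have "\<dots> \<le> (\<Sum>i\<in>(UNIV::'n set). \<Sum>j\<in>(UNIV::'n set). norm f)"
    by (intro sum_mono Em_entry_le)
  finally show "norm (Em f) \<le> norm f * (real (CARD('n)) * real (CARD('n)))" by (simp add: mult_ac)
qed


lemma mat_pow_0[simp]: "mat_pow M 0 = mat 1" by (simp add: mat_pow_def)
lemma mat_pow_Suc: "mat_pow M (Suc k) = mat_pow M k ** M" by (simp add: mat_pow_def)

lemma Lm_pow: "Lm (mat_pow M k) = (Lm M)^k"
  by (induction k) (simp_all add: Lm_one mat_pow_Suc Lm_mult power_commutes)

lemma exp_sums_cm: "(\<lambda>n. (x::'n::finite cm)^n /\<^sub>R fact n) sums exp x"
  by (simp add: exp_def summable_exp_generic summable_sums)

lemma mat_exp_sums: "(\<lambda>k. (1 / fact k) *\<^sub>R mat_pow M k) sums Em (exp (Lm M))"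
proof -
  have "(\<lambda>n. Em ((Lm M)^n /\<^sub>R fact n)) sums Em (exp (Lm M))"
    by (rule bounded_linear.sums[OF bl_Em exp_sums_cm])
  moreover have "Em ((Lm M)^n /\<^sub>R fact n) = (1 / fact n) *\<^sub>R mat_pow M n" for n
    by (simp add: linear_simps(5)[OF bl_Em] Lm_pow[symmetric] divide_inverse)
  ultimately show ?thesis by simp
qed

lemma mat_exp_Em: "mat_exp M = Em (exp (Lm M))"
  unfolding mat_exp_def using mat_exp_sums sums_unique by metis

lemma Lm_mat_exp: "Lm (mat_exp M) = exp (Lm M)"
proof -
  have "(\<lambda>k. Lm ((1 / fact k) *\<^sub>R mat_pow M k)) sums Lm (mat_exp M)"
    by (rule bounded_linear.sums[OF bl_Lm]) (simp add: mat_exp_Em mat_exp_sums)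
  moreover have "Lm ((1 / fact k) *\<^sub>R mat_pow M k) = (Lm M)^k /\<^sub>R fact k" for k
    by (simp add: linear_simps(5)[OF bl_Lm] Lm_pow divide_inverse)
  ultimately show ?thesis using exp_sums_cm sums_unique2 by (metis (no_types, lifting) sums_cong)
qed

lemma Em_mult_Lm: "Em (Lm A * Lm B) = A ** B"
  by (simp add: Lm_mult[symmetric])

lemma mat_exp_add:
  assumes "X ** Y = Y ** (X::complex^'n::finite^'n)"
  shows "mat_exp (X + Y) = mat_exp X ** mat_exp Y"
proof -
  have c: "Lm X * Lm Y = Lm Y * Lm X" by (simp add: Lm_mult[symmetric] assms)
  have "mat_exp (X + Y) = Em (exp (Lm X + Lm Y))"
    by (simp add: mat_exp_Em linear_simps(1)[OF bl_Lm])
  also have "\<dots> = Em (exp (Lm X) * exp (Lm Y))" by (simp add: exp_add_commuting[OF c])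
  also have "\<dots> = mat_exp X ** mat_exp Y" by (simp add: Lm_mat_exp[symmetric] Em_mult_Lm)
  finally show ?thesis .
qed

lemma mat_exp_zero: "mat_exp (0::complex^'n::finite^'n) = mat 1"
  by (simp add: mat_exp_Em linear_simps(3)[OF bl_Lm] Lm_one[symmetric])

lemma mat_exp_transfer:
  assumes "bounded_linear f" "\<And>k. f (mat_pow M k) = mat_pow N k"
  shows "f (mat_exp M) = mat_exp N"
proof -
  have "(\<lambda>k. f ((1 / fact k) *\<^sub>R mat_pow M k)) sums f (mat_exp M)"
    by (rule bounded_linear.sums[OF assms(1)]) (simp add: mat_exp_Em mat_exp_sums)
  then have "(\<lambda>k. (1 / fact k) *\<^sub>R mat_pow N k) sums f (mat_exp M)"
    by (simp add: linear_simps(5)[OF assms(1)] assms(2))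
  then show ?thesis using mat_exp_Em mat_exp_sums sums_unique2 by metis
qed

lemma mat_exp_cont: "continuous_on UNIV (\<lambda>t::real. mat_exp (t *\<^sub>R (M::complex^'n::finite^'n)))"
proof -
  have "continuous_on UNIV (\<lambda>t::real. exp (t *\<^sub>R Lm M))"
    using exp_scaleR_has_vector_derivative_right
    by (metis continuous_at_imp_continuous_on has_vector_derivative_continuous)
  then have "continuous_on UNIV (\<lambda>t::real. Em (exp (t *\<^sub>R Lm M)))"
    by (intro continuous_on_compose2[OF bounded_linear.continuous_on[OF bl_Em continuous_on_id]]) auto
  then show ?thesis by (simp add: mat_exp_Em linear_simps(5)[OF bl_Lm])
qed


definition Cm :: "('v::finite \<Rightarrow> 'v \<Rightarrow> bool) \<Rightarrow> complex^'v^'v" where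
  "Cm E = (\<chi> i j. - \<i> * adj_matrix E $ i $ j)"

lemma transition_Cm: "transition E t = mat_exp (t *\<^sub>R Cm E)"
  unfolding transition_def Cm_def
  by (rule arg_cong[where f=mat_exp]) (simp add: vec_eq_iff, simp add: scaleR_conv_of_real mult_ac)

lemma scaleR_matrix_left: "(a *\<^sub>R A) ** B = a *\<^sub>R (A ** (B::complex^'n::finite^'n))"
  by (simp add: vec_eq_iff matrix_matrix_mult_def scaleR_sum_right)

lemma scaleR_matrix_right: "A ** (a *\<^sub>R B) = a *\<^sub>R (A ** (B::complex^'n::finite^'n))"
  by (simp add: vec_eq_iff matrix_matrix_mult_def scaleR_sum_right)

lemma transition_add: "transition E (s + t) = transition E s ** transition E t"
  unfolding transition_Cm scaleR_add_left
  by (rule mat_exp_add) (simp add: scaleR_matrix_left scaleR_matrix_right)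

lemma transition_0: "transition E 0 = mat 1"
  by (simp add: transition_Cm mat_exp_zero)

lemma linear_map_cnj: "linear (map_matrix cnj :: complex^'n::finite^'n \<Rightarrow> _)"
  by (rule linearI) (simp_all add: vec_eq_iff map_matrix_def)

lemma map_cnj_mult: "map_matrix cnj (A ** B) = map_matrix cnj A ** map_matrix cnj (B::complex^'n::finite^'n)"
  by (simp add: vec_eq_iff map_matrix_def matrix_matrix_mult_def)

lemma map_cnj_pow: "map_matrix cnj (mat_pow M k) = mat_pow (map_matrix cnj M) k"
  by (induction k) (simp_all add: mat_pow_Suc map_cnj_mult, simp add: vec_eq_iff map_matrix_def mat_def)

lemma map_cnj_C: "map_matrix cnj (t *\<^sub>R Cm E) = (- t) *\<^sub>R Cm E"
  by (simp add: vec_eq_iff map_matrix_def Cm_def adj_matrix_def)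

lemma transition_cnj: "map_matrix cnj (transition E t) = transition E (- t)"
  unfolding transition_Cm
  by (rule mat_exp_transfer) (simp_all add: linear_map_cnj linear_conv_bounded_linear[symmetric] map_cnj_pow map_cnj_C)

lemma transition_cont: "continuous_on UNIV (\<lambda>t. transition E t $ i $ j)"
proof -
  have "continuous_on UNIV (\<lambda>t. transition E t)" unfolding transition_Cm by (rule mat_exp_cont)
  then show ?thesis
    by (intro continuous_on_compose2[OF bounded_linear.continuous_on[OF bounded_linear_vec_nth continuous_on_id]]
        continuous_on_compose2[OF bounded_linear.continuous_on[OF bounded_linear_vec_nth continuous_on_id]]) auto
qed

lemma transition_near0:
  assumes "e > 0"
  shows "\<exists>d>0. \<forall>t. \<bar>t\<bar> < d \<longrightarrow> cmod (transition E t $ i $ i - 1) < e"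
proof -
  have "isCont (\<lambda>t. transition E t $ i $ i) 0"
    using transition_cont continuous_on_eq_continuous_at by blast
  then have "(\<lambda>t. transition E t $ i $ i) \<midarrow>0\<rightarrow> 1" by (simp add: isCont_def transition_0 mat_def)
  then obtain d where "d > 0" "\<forall>t. t \<noteq> 0 \<and> norm (t - 0) < d \<longrightarrow> norm (transition E t $ i $ i - 1) < e"
    using assms unfolding LIM_eq by blast
  moreover have "transition E 0 $ i $ i = 1" by (simp add: transition_0 mat_def)
  ultimately show ?thesis using assms
    by (intro exI[of _ d] conjI allI impI) (auto, metis (no_types) abs_zero diff_self norm_zero)
qed


definition i1 :: "complex^'a::finite^'a \<Rightarrow> complex^('a \<times> 'b::finite)^('a \<times> 'b)" where
  "i1 M = (\<chi> i j. if snd i = snd j then M $ fst i $ fst j else 0)"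
definition i2 :: "complex^'b::finite^'b \<Rightarrow> complex^('a::finite \<times> 'b)^('a \<times> 'b)" where
  "i2 M = (\<chi> i j. if fst i = fst j then M $ snd i $ snd j else 0)"

lemma sum_pair: "(\<Sum>x\<in>(UNIV::('a::finite\<times>'b::finite) set). f x) = (\<Sum>a\<in>UNIV. \<Sum>b\<in>UNIV. f (a,b))"
proof -
  have "(\<Sum>a\<in>UNIV. \<Sum>b\<in>UNIV. f (a,b)) = (\<Sum>x\<in>(UNIV \<times> UNIV). f x)"
    by (rule sum.cartesian_product'[symmetric])
  then show ?thesis by simp
qed

lemma sum_pair2: "(\<Sum>x\<in>(UNIV::('a::finite\<times>'b::finite) set). f x) = (\<Sum>b\<in>UNIV. \<Sum>a\<in>UNIV. f (a,b))"
  unfolding sum_pair by (rule sum.swap)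

lemma i1_mult: "i1 (A ** B) = (i1 A ** i1 B :: complex^('a::finite \<times> 'b::finite)^('a \<times> 'b))"
  unfolding i1_def matrix_matrix_mult_def
  by (simp add: vec_eq_iff sum_pair if_distrib[where f="\<lambda>x. x * _"] cong: if_cong)

lemma i2_mult: "i2 (A ** B) = (i2 A ** i2 B :: complex^('a::finite \<times> 'b::finite)^('a \<times> 'b))"
  unfolding i2_def matrix_matrix_mult_def
  by (simp add: vec_eq_iff sum_pair2 if_distrib[where f="\<lambda>x. x * _"] cong: if_cong)

lemma i12_mult: "(i1 A ** i2 B :: complex^('a::finite \<times> 'b::finite)^('a \<times> 'b)) $ x $ y = A $ fst x $ fst y * B $ snd x $ snd y"
  unfolding i1_def i2_def matrix_matrix_mult_def
  by (simp add: sum_pair2 if_distrib[where f="\<lambda>x. x * _"] if_distrib[where f="\<lambda>x. _ * x"] cong: if_cong)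

lemma i21_mult: "(i2 B ** i1 A :: complex^('a::finite \<times> 'b::finite)^('a \<times> 'b)) $ x $ y = A $ fst x $ fst y * B $ snd x $ snd y"
  unfolding i1_def i2_def matrix_matrix_mult_def
  by (simp add: sum_pair if_distrib[where f="\<lambda>x. x * _"] if_distrib[where f="\<lambda>x. _ * x"] cong: if_cong)

lemma i12_comm: "(i1 A ** i2 B :: complex^('a::finite \<times> 'b::finite)^('a \<times> 'b)) = i2 B ** i1 A"
  by (simp add: vec_eq_iff i12_mult i21_mult)

lemma i1_one: "(i1 (mat 1) :: complex^('a::finite \<times> 'b::finite)^('a \<times> 'b)) = mat 1"
  by (simp add: vec_eq_iff i1_def mat_def prod_eq_iff)

lemma i2_one: "(i2 (mat 1) :: complex^('a::finite \<times> 'b::finite)^('a \<times> 'b)) = mat 1"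
  by (simp add: vec_eq_iff i2_def mat_def prod_eq_iff)

lemma i1_pow: "(i1 (mat_pow M k) :: complex^('a::finite \<times> 'b::finite)^('a \<times> 'b)) = mat_pow (i1 M) k"
  by (induction k) (simp_all add: i1_one mat_pow_Suc i1_mult)

lemma i2_pow: "(i2 (mat_pow M k) :: complex^('a::finite \<times> 'b::finite)^('a \<times> 'b)) = mat_pow (i2 M) k"
  by (induction k) (simp_all add: i2_one mat_pow_Suc i2_mult)

lemma linear_i1: "linear (i1 :: _ \<Rightarrow> complex^('a::finite \<times> 'b::finite)^('a \<times> 'b))"
  by (rule linearI) (simp_all add: vec_eq_iff i1_def)

lemma linear_i2: "linear (i2 :: _ \<Rightarrow> complex^('a::finite \<times> 'b::finite)^('a \<times> 'b))"
  by (rule linearI) (simp_all add: vec_eq_iff i2_def)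

lemma mat_exp_i1: "(i1 (mat_exp M) :: complex^('a::finite \<times> 'b::finite)^('a \<times> 'b)) = mat_exp (i1 M)"
  by (rule mat_exp_transfer) (simp_all add: linear_i1 linear_conv_bounded_linear[symmetric] i1_pow)

lemma mat_exp_i2: "(i2 (mat_exp M) :: complex^('a::finite \<times> 'b::finite)^('a \<times> 'b)) = mat_exp (i2 M)"
  by (rule mat_exp_transfer) (simp_all add: linear_i2 linear_conv_bounded_linear[symmetric] i2_pow)

lemma i1_scaleR: "(i1 (t *\<^sub>R X) :: complex^('a::finite \<times> 'b::finite)^('a \<times> 'b)) = t *\<^sub>R i1 X"
  by (simp add: vec_eq_iff i1_def)

lemma i2_scaleR: "(i2 (t *\<^sub>R X) :: complex^('a::finite \<times> 'b::finite)^('a \<times> 'b)) = t *\<^sub>R i2 X"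
  by (simp add: vec_eq_iff i2_def)

lemma Cm_prod:
  assumes "simple_graph E1"
  shows "Cm (cart_prod E1 E2) = i1 (Cm E1) + i2 (Cm E2)"
proof -
  have irr: "\<not> E1 a a" for a using assms by (simp add: simple_graph_def)
  show ?thesis
    unfolding vec_eq_iff
  proof (intro allI)
    fix i j :: "'a \<times> 'b"
    obtain a b a' b' where ij: "i = (a,b)" "j = (a',b')" by fastforce
    show "Cm (cart_prod E1 E2) $ i $ j = (i1 (Cm E1) + i2 (Cm E2)) $ i $ j"
      unfolding ij Cm_def i1_def i2_def adj_matrix_def cart_prod_def
      by (simp add: irr)
  qed
qed

lemma transition_prod:
  assumes "simple_graph E1"
  shows "transition (cart_prod E1 E2) t $ x $ y = transition E1 t $ fst x $ fst y * transition E2 t $ snd x $ snd y"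
proof -
  have "transition (cart_prod E1 E2) t = mat_exp (i1 (t *\<^sub>R Cm E1) + i2 (t *\<^sub>R Cm E2))"
    unfolding transition_Cm Cm_prod[OF assms] scaleR_add_right i1_scaleR i2_scaleR ..
  also have "\<dots> = mat_exp (i1 (t *\<^sub>R Cm E1)) ** mat_exp (i2 (t *\<^sub>R Cm E2))"
    by (rule mat_exp_add) (rule i12_comm)
  also have "\<dots> = i1 (transition E1 t) ** i2 (transition E2 t)"
    by (simp add: transition_Cm mat_exp_i1 mat_exp_i2)
  finally show ?thesis by (simp add: i12_mult)
qed


lemma mv_smult: "(A::complex^'n::finite^'n) *v (c *s x) = c *s (A *v x)"
  by (simp add: vec_eq_iff matrix_vector_mult_def sum_distrib_left mult_ac)

lemma trans_pow:
  assumes "transition E \<tau> *v x = g *s x"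
  shows "transition E (real m * \<tau>) *v x = g^m *s x"
proof (induction m)
  case 0 then show ?case by (simp add: transition_0)
next
  case (Suc m)
  have eq: "real (Suc m) * \<tau> = \<tau> + real m * \<tau>" by (simp add: algebra_simps)
  have "transition E (real (Suc m) * \<tau>) *v x = transition E \<tau> *v (transition E (real m * \<tau>) *v x)"
    by (simp only: eq transition_add matrix_vector_mul_assoc)
  also have "\<dots> = g^Suc m *s x" using Suc by (simp add: mv_smult assms vector_smult_assoc mult.commute)
  finally show ?case .
qed

lemma trans_inv:
  assumes "transition E \<tau> *v x = g *s y" "g \<noteq> 0"
  shows "transition E (- \<tau>) *v y = (1 / g) *s x"
proof -
  have "x = transition E (- \<tau>) *v (transition E \<tau> *v x)"
    by (simp add: matrix_vector_mul_assoc transition_add[symmetric] transition_0)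
  also have "\<dots> = g *s (transition E (- \<tau>) *v y)" by (simp add: assms mv_smult)
  finally have "(1/g) *s x = (1/g) *s (g *s (transition E (- \<tau>) *v y))" by simp
  then show ?thesis using assms(2) by (simp add: vector_smult_assoc)
qed

lemma col_iff: "((M::complex^'n::finite^'n) *v axis w 1 = c *s axis v 1) \<longleftrightarrow> (\<forall>x. M $ x $ w = (if x = v then c else 0))"
  unfolding vec_eq_iff mv_axis vector_smult_component by (simp add: axis_def)

lemma trans_swap:
  assumes "transition E \<eta> *v axis w 1 = g *s axis v 1" "cmod g = 1"
  shows "transition E \<eta> *v axis v 1 = g *s axis w 1"
proof -
  have g0: "g \<noteq> 0" using assms(2) by auto
  have "transition E (- \<eta>) *v axis v 1 = (1/g) *s axis w 1" by (rule trans_inv[OF assms(1) g0])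
  then have h: "\<forall>x. cnj (transition E \<eta> $ x $ v) = (if x = w then 1/g else 0)"
    unfolding col_iff transition_cnj[symmetric] by (simp add: map_matrix_def)
  have "cnj (1/g) = g"
  proof -
    have "g * cnj g = 1" using assms(2) by (simp add: complex_mult_cnj cmod_def)
    then show ?thesis using g0 by (simp add: field_simps)
  qed
  then have "\<forall>x. transition E \<eta> $ x $ v = (if x = w then g else 0)"
    using h by (metis complex_cnj_cnj complex_cnj_zero)
  then show ?thesis by (simp add: col_iff)
qed


lemma trans_odd:
  assumes "transition E \<eta> *v axis w 1 = g *s axis v 1" "transition E \<eta> *v axis v 1 = g *s axis w 1"
  shows "transition E (real (2*n+1) * \<eta>) *v axis w 1 = g^(2*n+1) *s axis v 1"
proof (induction n)
  case 0 then show ?case using assms(1) by simp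
next
  case (Suc n)
  have eq: "real (2 * Suc n + 1) * \<eta> = \<eta> + (\<eta> + real (2*n+1) * \<eta>)" by (simp add: algebra_simps)
  have "transition E (real (2 * Suc n + 1) * \<eta>) *v axis w 1
      = transition E \<eta> *v (transition E \<eta> *v (transition E (real (2*n+1) * \<eta>) *v axis w 1))"
    by (simp only: eq transition_add matrix_vector_mul_assoc)
  also have "\<dots> = g^(2 * Suc n + 1) *s axis v 1"
    using Suc by (simp add: mv_smult assms vector_smult_assoc mult_ac)
  finally show ?case .
qed

lemma entry_of_col: "(M::complex^'n::finite^'n) *v axis w 1 = c *s axis v 1 \<Longrightarrow> M $ v $ w = c"
  by (simp add: col_iff)

theorem theorem4p2:
  fixes E1 :: "'a::finite \<Rightarrow> 'a \<Rightarrow> bool" and E2 :: "'b::finite \<Rightarrow> 'b \<Rightarrow> bool"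
    and u :: 'a and v w :: 'b and \<tau> \<eta> :: real and \<gamma> \<gamma>' :: complex
  assumes "simple_graph E1" and "simple_graph E2"
    and "\<tau> \<noteq> 0" and "cmod \<gamma> = 1"
    and "transition E1 \<tau> *v axis u 1 = \<gamma> *s axis u 1"
    and "\<eta> \<noteq> 0" and "cmod \<gamma>' = 1"
    and "transition E2 \<eta> *v axis w 1 = \<gamma>' *s axis v 1"
    and "\<forall>p q :: rat. of_rat p * \<tau> + of_rat q * \<eta> = 0 \<longrightarrow> p = 0 \<and> q = 0"
  shows "pgst (cart_prod E1 E2) (u, v) (u, w)"
proof -
  note A = assms
  define \<tau>1 where "\<tau>1 = \<bar>\<tau>\<bar>"
  define \<eta>1 where "\<eta>1 = \<bar>\<eta>\<bar>"
  have \<tau>1p: "\<tau>1 > 0" and \<eta>1p: "\<eta>1 > 0" using A(3,6) by (auto simp: \<tau>1_def \<eta>1_def)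
  obtain \<gamma>1 where g1: "cmod \<gamma>1 = 1" "transition E1 \<tau>1 *v axis u 1 = \<gamma>1 *s axis u 1"
  proof (cases "\<tau> > 0")
    case True then show ?thesis using that A(4,5) by (simp add: \<tau>1_def)
  next
    case False
    then have "\<tau>1 = - \<tau>" by (simp add: \<tau>1_def)
    moreover have "transition E1 (- \<tau>) *v axis u 1 = (1/\<gamma>) *s axis u 1"
      using trans_inv[OF A(5)] A(4) by (metis norm_zero zero_neq_one)
    moreover have "cmod (1/\<gamma>) = 1" using A(4) by (simp add: norm_divide)
    ultimately show ?thesis using that by auto
  qed
  have sw: "transition E2 \<eta> *v axis v 1 = \<gamma>' *s axis w 1" by (rule trans_swap[OF A(8,7)])
  obtain g where g: "cmod g = 1" "transition E2 \<eta>1 *v axis w 1 = g *s axis v 1"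
      "transition E2 \<eta>1 *v axis v 1 = g *s axis w 1"
  proof (cases "\<eta> > 0")
    case True then show ?thesis using that A(7,8) sw by (simp add: \<eta>1_def)
  next
    case False
    then have "\<eta>1 = - \<eta>" by (simp add: \<eta>1_def)
    moreover have "transition E2 (- \<eta>) *v axis v 1 = (1/\<gamma>') *s axis w 1"
      using trans_inv[OF A(8)] A(7) by (metis norm_zero zero_neq_one)
    moreover have "transition E2 (- \<eta>) *v axis w 1 = (1/\<gamma>') *s axis v 1"
      using trans_inv[OF sw] A(7) by (metis norm_zero zero_neq_one)
    moreover have "cmod (1/\<gamma>') = 1" using A(7) by (simp add: norm_divide)
    ultimately show ?thesis using that by auto
  qed
  define \<theta> where "\<theta> = \<tau>1 / (2 * \<eta>1)"
  have \<theta>p: "\<theta> > 0" using \<tau>1p \<eta>1p by (simp add: \<theta>_def)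
  have irr: "\<theta> \<notin> \<rat>"
  proof
    assume "\<theta> \<in> \<rat>"
    then obtain r where r: "\<theta> = of_rat r" by (auto elim: Rats_cases)
    define p :: rat where "p = (if \<tau> \<ge> 0 then 1 else -1)"
    define q :: rat where "q = - 2 * r * (if \<eta> \<ge> 0 then 1 else -1)"
    have "\<tau>1 = 2 * of_rat r * \<eta>1" using r \<eta>1p by (simp add: \<theta>_def field_simps)
    moreover have "of_rat p * \<tau> = \<tau>1" by (simp add: p_def \<tau>1_def)
    moreover have "of_rat q * \<eta> = - 2 * of_rat r * \<eta>1"
      by (simp add: q_def \<eta>1_def of_rat_mult of_rat_minus)
    ultimately have "of_rat p * \<tau> + of_rat q * \<eta> = 0" by simp
    then have "p = 0" using A(9) by blast
    then show False by (simp add: p_def split: if_splits)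
  qed
  show ?thesis unfolding pgst_def
  proof (intro allI impI)
    fix \<epsilon> :: real assume "\<epsilon> > 0"
    obtain d where d: "d > 0" "\<forall>t. \<bar>t\<bar> < d \<longrightarrow> cmod (transition E2 t $ v $ v - 1) < \<epsilon>"
      using transition_near0[OF \<open>\<epsilon> > 0\<close>] by blast
    have "d / (2 * \<eta>1) > 0" using d \<eta>1p by simp
    then obtain k :: nat where k: "k > 0" "\<bar>frac (real k * \<theta>) - 1/2\<bar> < d / (2 * \<eta>1)"
      using Kronecker_approx_1_explicit[OF irr, of "1/2"] by auto
    define n where "n = nat \<lfloor>real k * \<theta>\<rfloor>"
    have kt0: "real k * \<theta> \<ge> 0" using \<theta>p by simp
    have nfl: "real n = of_int \<lfloor>real k * \<theta>\<rfloor>" using kt0 by (simp add: n_def)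
    define \<delta> where "\<delta> = 2 * \<eta>1 * (frac (real k * \<theta>) - 1/2)"
    have \<delta>d: "\<bar>\<delta>\<bar> < d"
    proof -
      have "\<bar>\<delta>\<bar> = 2 * \<eta>1 * \<bar>frac (real k * \<theta>) - 1/2\<bar>" using \<eta>1p by (simp add: \<delta>_def abs_mult)
      also have "\<dots> < 2 * \<eta>1 * (d / (2 * \<eta>1))" using k(2) \<eta>1p by (intro mult_strict_left_mono) auto
      also have "\<dots> = d" using \<eta>1p by simp
      finally show ?thesis .
    qed
    define t where "t = real k * \<tau>1"
    have teq: "t = \<delta> + real (2*n+1) * \<eta>1"
      using \<eta>1p by (simp add: t_def \<delta>_def frac_def nfl \<theta>_def field_simps)
    have e1: "transition E1 t $ u $ u = \<gamma>1 ^ k"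
      unfolding t_def by (rule entry_of_col, rule trans_pow[OF g1(2)])
    have "transition E2 t *v axis w 1 = transition E2 \<delta> *v (transition E2 (real (2*n+1) * \<eta>1) *v axis w 1)"
      by (simp only: teq transition_add matrix_vector_mul_assoc)
    also have "\<dots> = g^(2*n+1) *s (transition E2 \<delta> *v axis v 1)"
      by (simp only: trans_odd[OF g(2,3)] mv_smult)
    finally have e2: "transition E2 t $ v $ w = g^(2*n+1) * transition E2 \<delta> $ v $ v"
      by (metis mv_axis vector_smult_component)
    have "cmod (transition (cart_prod E1 E2) t $ (u, v) $ (u, w)) = cmod (transition E2 \<delta> $ v $ v)"
      by (simp add: transition_prod[OF A(1)] e1 e2 norm_mult norm_power g1(1) g(1))
    moreover have "\<bar>cmod (transition E2 \<delta> $ v $ v) - 1\<bar> < \<epsilon>"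
      using norm_triangle_ineq3[of "transition E2 \<delta> $ v $ v" 1] d(2) \<delta>d by force
    ultimately show "\<exists>t. \<bar>cmod (transition (cart_prod E1 E2) t $ (u, v) $ (u, w)) - 1\<bar> < \<epsilon>" by (intro exI[of _ t]) simp
  qed
qed

end
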